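(* Let $q$ be a prime power, $e\ge 2$, $r$ a positive integer, $a\in\mathbb{F}_{q^e}$ with $a\neq 0$, $f(x)=x^r(x^{q-1}+a)$, and $\ell=q^{e-1}+\cdots+q+1$. If $r\bmod \ell\neq hq+1$ for every integer $h$, then $f(x)$ does not permute $\mathbb{F}_{q^e}$.
   Context: $r\bmod\ell$ denotes the least nonnegative residue of $r$ modulo $\ell$. *)

theory Defs
  imports "HOL-Computational_Algebra.Primes"
begin

end

theory Submission
  imports Defs "HOL-Number_Theory.Residues" "HOL-Computational_Algebra.Polynomial"
begin

lemma ff_pow_card1:
  fixes x :: "'a::{field,finite}"
  assumes "x \<noteq> 0"
  shows "x ^ (card (UNIV::'a set) - 1) = 1"
proof -
  have "(\<Prod>y\<in>UNIV-{0}. x * y) = x ^ card (UNIV-{0::'a}) * \<Prod>(UNIV-{0::'a})"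
    by (simp add: prod.distrib)
  also have "card (UNIV-{0::'a}) = card (UNIV::'a set) - 1" by (simp add: card_Diff_singleton)
  also have "(\<Prod>y\<in>UNIV-{0}. x * y) = (\<Prod>y\<in>UNIV-{0}. y)"
    by (rule prod.reindex_bij_witness[of _ "\<lambda>y. y / x" "\<lambda>y. x * y"]) (use assms in auto)
  finally have "\<Prod>(UNIV-{0::'a}) = x ^ (card (UNIV::'a set) - 1) * \<Prod>(UNIV-{0::'a})" .
  moreover have "\<Prod>(UNIV-{0::'a}) \<noteq> 0" by simp
  ultimately show ?thesis by simp
qed

lemma ff_char_prime: "prime CHAR('a::{field,finite})"
  using prime_CHAR_semidom[where ?'a = 'a] finite_imp_CHAR_pos[where ?'a='a] by auto

lemma ff_card_zero: "(of_nat (card (UNIV::'a set)) :: 'a::{field,finite}) = 0"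
  using CHAR_dvd_CARD[where ?'a='a] of_nat_eq_0_iff_char_dvd by blast

lemma ff_nonroot:
  assumes "0 < g" "g < card (UNIV::'a::{field,finite} set) - 1"
  shows "\<exists>c::'a. c \<noteq> 0 \<and> c ^ g \<noteq> 1"
proof (rule ccontr)
  assume H: "\<not> ?thesis"
  define P :: "'a poly" where "P = monom 1 g + (- 1)"
  have dP: "degree P = g" unfolding P_def using assms(1)
    by (subst degree_add_eq_left) (simp_all add: degree_monom_eq)
  hence "P \<noteq> 0" using assms(1) by auto
  hence "card {x. poly P x = 0} \<le> g" using card_poly_roots_bound dP by metis
  moreover have "UNIV - {0} \<subseteq> {x. poly P x = 0}" using H by (auto simp: P_def poly_monom)
  hence "card (UNIV - {0::'a}) \<le> card {x. poly P x = 0}" by (intro card_mono) auto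
  ultimately show False using assms(2) by (simp add: card_Diff_singleton)
qed

lemma ff_sum_pow:
  assumes "0 < m"
  shows "(\<Sum>x::'a::{field,finite}\<in>UNIV. x ^ m) =
     (if (card (UNIV::'a set) - 1) dvd m then -1 else 0)"
proof (cases "(card (UNIV::'a set) - 1) dvd m")
  case True
  then obtain k where k: "m = (card (UNIV::'a set) - 1) * k" by blast
  have "(\<Sum>x::'a\<in>UNIV. x ^ m) = (\<Sum>x::'a\<in>insert 0 (UNIV-{0}). x ^ m)"
    by (simp add: insert_UNIV)
  also have "\<dots> = (\<Sum>x::'a\<in>UNIV-{0}. x ^ m)" using assms by (subst sum.insert) auto
  also have "\<dots> = (\<Sum>x::'a\<in>UNIV-{0}. 1)"
  proof (intro sum.cong refl)
    fix x :: 'a assume "x \<in> UNIV - {0}"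
    hence "x ^ (card (UNIV::'a set) - 1) = 1" by (intro ff_pow_card1) auto
    thus "x ^ m = 1" by (simp add: k power_mult)
  qed
  also have "\<dots> = of_nat (card (UNIV::'a set) - 1)" by (simp add: card_Diff_singleton)
  also have "\<dots> = of_nat (card (UNIV::'a set)) - 1"
    using finite_UNIV_card_ge_0[where ?'a = 'a] by (simp add: of_nat_diff)
  also have "\<dots> = -1" by (simp add: ff_card_zero)
  finally show ?thesis using True by simp
next
  case False
  let ?Q = "card (UNIV::'a set)"
  define g where "g = gcd m (?Q - 1)"
  have g0: "0 < g" using assms by (simp add: g_def)
  have "g dvd ?Q - 1" by (simp add: g_def)
  moreover have "g \<noteq> ?Q - 1" using False by (metis g_def gcd_dvd1)
  moreover have "?Q - 1 > 0"
  proof -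
    have "card {0::'a, 1} \<le> ?Q" by (intro card_mono) auto
    thus ?thesis by simp
  qed
  ultimately have "g < ?Q - 1" by (meson dvd_imp_le le_neq_implies_less)
  then obtain c :: 'a where c: "c \<noteq> 0" "c ^ g \<noteq> 1" using ff_nonroot g0 by blast
  have cm: "c ^ m \<noteq> 1"
  proof
    assume cm1: "c ^ m = 1"
    obtain x y where xy: "m * x = (?Q - 1) * y + g" using bezout_nat[of m "?Q - 1"] assms g_def by auto
    have "1 = (c ^ m) ^ x" using cm1 by simp
    also have "\<dots> = (c ^ (?Q - 1)) ^ y * c ^ g" by (simp add: xy flip: power_mult power_add)
    also have "\<dots> = c ^ g" using ff_pow_card1[OF c(1)] by simp
    finally show False using c(2) by simp
  qed
  have "(\<Sum>x::'a\<in>UNIV. x ^ m) = (\<Sum>x::'a\<in>UNIV. (c * x) ^ m)"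
    by (rule sum.reindex_bij_witness[of _ "\<lambda>y. c * y" "\<lambda>y. y / c"]) (use c in auto)
  also have "\<dots> = c ^ m * (\<Sum>x::'a\<in>UNIV. x ^ m)"
    by (simp add: power_mult_distrib sum_distrib_left)
  finally have "(c ^ m - 1) * (\<Sum>x::'a\<in>UNIV. x ^ m) = 0" by (simp add: algebra_simps)
  with cm have "(\<Sum>x::'a\<in>UNIV. x ^ m) = 0" by simp
  thus ?thesis using False by simp
qed

lemma ff_expand:
  fixes y a :: "'a::{field,finite}"
  assumes "Suc N = CHAR('a) ^ n" "n \<ge> 1"
  shows "(y + a) ^ N = (\<Sum>u<Suc N. y ^ u * (-a) ^ (N - u))"
proof -
  have pc: "prime CHAR('a)" by (rule ff_char_prime)
  have fd: "\<And>x z::'a. (x + z) ^ Suc N = x ^ Suc N + z ^ Suc N"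
    using freshmans_dream'[OF pc assms(1)] .
  have "(a + (-a)) ^ Suc N = a ^ Suc N + (-a) ^ Suc N" by (rule fd)
  hence ma: "(-a) ^ Suc N = - (a ^ Suc N)" by (simp add: eq_neg_iff_add_eq_0 add.commute)
  have "(y + a) ^ Suc N = y ^ Suc N - (-a) ^ Suc N" by (simp only: fd ma diff_minus_eq_add)
  also have "\<dots> = (y - -a) * (\<Sum>u<Suc N. y ^ u * (-a) ^ (N - u))" by (rule diff_power_eq_sum)
  finally have key: "(y + a) ^ Suc N = (y + a) * (\<Sum>u<Suc N. y ^ u * (-a) ^ (N - u))" by simp
  have N1: "N \<ge> 1"
  proof -
    have "CHAR('a) \<ge> 2" using pc prime_ge_2_nat by blast
    hence "CHAR('a) ^ n \<ge> 2 ^ 1" using assms(2)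
      by (meson le_trans one_le_numeral power_increasing power_mono zero_le_numeral)
    thus ?thesis using assms(1) by simp
  qed
  show ?thesis
  proof (cases "y + a = 0")
    case False
    thus ?thesis using key by simp
  next
    case True
    hence y: "y = -a" by (simp add: eq_neg_iff_add_eq_0)
    have "(\<Sum>u<Suc N. y ^ u * (-a) ^ (N - u)) = (\<Sum>u<Suc N. (-a) ^ N)"
      by (intro sum.cong refl) (auto simp: y simp flip: power_add)
    also have "\<dots> = of_nat (CHAR('a) ^ n) * (-a) ^ N" by (simp add: assms(1)[symmetric])
    also have "\<dots> = 0" using assms(2) by simp
    finally show ?thesis using True N1 by simp
  qed
qed

lemma nt_lemma:
  fixes q d r :: nat
  assumes q2: "q \<ge> 2" and d1: "d \<ge> 1"
    and ld: "l = (\<Sum>i<Suc d. q ^ i)" and sd: "s = (\<Sum>i<d. q ^ i)"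
    and c1: "(r mod l) mod q \<noteq> 1"
  shows "\<exists>u0. u0 \<le> q ^ d - 1 \<and> (\<forall>u. u \<le> q ^ d - 1 \<longrightarrow> (l dvd r * s + u \<longleftrightarrow> u = u0))"
proof -
  have l1: "l = q ^ d + s" using ld sd by simp
  have l2: "l = q * s + 1" unfolding ld sd by (subst sum.lessThan_Suc_shift) (simp add: sum_distrib_left)
  have s1: "(q - 1) * s = q ^ d - 1"
  proof -
    have "int (q * s + 1) = int (q ^ d + s)" using l1 l2 by simp
    hence "int q * int s + 1 = int (q ^ d) + int s" by simp
    hence "(int q - 1) * int s = int (q ^ d) - 1" by (simp add: algebra_simps)
    moreover have "q ^ d \<ge> 1" using q2 by simp
    ultimately have "int ((q - 1) * s) = int (q ^ d - 1)" using q2 by (simp add: of_nat_diff)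
    thus ?thesis by (simp only: of_nat_eq_iff)
  qed
  have spos: "s \<ge> 1"
  proof -
    have "s \<ge> q ^ 0" unfolding sd using d1 by (intro member_le_sum) auto
    thus ?thesis by simp
  qed
  have ss1: "1 * s \<le> (q - 1) * s" by (intro mult_le_mono1) (use q2 in simp)
  have ssmall: "s \<le> q ^ d - 1" using ss1 s1 by (metis mult_1)
  define R where "R = r mod l"
  define h where "h = R div q"
  define c where "c = R mod q"
  have Rl: "R < l" using l2 by (simp add: R_def)
  have Rhc: "R = h * q + c" by (simp add: h_def c_def)
  have cq: "c < q" using q2 by (simp add: c_def)
  have c1': "c \<noteq> 1" using c1 by (simp add: c_def R_def)
  have ex: "\<exists>u0. u0 \<le> q ^ d - 1 \<and> l dvd R * s + u0"
  proof (cases "c = 0")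
    case True
    have "h * q < s * q + 1" using Rl Rhc True l2 by (simp add: mult.commute)
    hence "h * q \<le> s * q" by linarith
    hence "h \<le> s" using q2 by simp
    moreover have "R * s + h = h * l" using Rhc True l2 by (simp add: algebra_simps)
    ultimately show ?thesis using ssmall by (intro exI[of _ h]) auto
  next
    case False
    hence c2: "c \<ge> 2" using c1' by simp
    have "h * q + c < s * q + 1" using Rl Rhc l2 by (simp add: mult.commute)
    hence "h * q < s * q" using c2 by linarith
    hence hs: "h < s" using q2 by simp
    have cs0: "(c - 1) * s \<le> (q - 1) * s" by (intro mult_le_mono1) (use cq in simp)
    have cs: "(c - 1) * s \<le> q ^ d - 1" using cs0 s1 by linarith
    define u0 where "u0 = h + q ^ d - (c - 1) * s"
    have "int u0 = int h + int (q ^ d) - int (c - 1) * int s"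
      using cs q2 unfolding u0_def by (simp add: of_nat_diff)
    hence u0i: "int u0 = int h + int (q ^ d) - (int c - 1) * int s" using c2 by (simp add: of_nat_diff)
    have "int u0 \<le> int (q ^ d) - 1"
    proof -
      have A: "int h + 1 \<le> int s" using hs by simp
      have B: "(int c - 1) * int s \<ge> 1 * int s" using c2 spos by (intro mult_right_mono) auto
      show ?thesis using u0i A B by linarith
    qed
    hence "u0 \<le> q ^ d - 1" by linarith
    moreover have "int (R * s + u0) = int ((h + 1) * l)"
    proof -
      have L: "int q * int s = int q ^ d + int s - 1"
      proof -
        have "int (q * s + 1) = int (q ^ d + s)" using l1 l2 by simp
        thus ?thesis by simp
      qed
      have "int (R * s + u0) = int h * (int q * int s) + int c * int s + int u0"
        using Rhc by (simp add: algebra_simps)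
      also have "\<dots> = int h * (int q ^ d + int s - 1) + int c * int s + int u0" by (simp only: L)
      also have "\<dots> = int h * int q ^ d + int h * int s + int q ^ d + int s"
        using u0i by (simp add: algebra_simps)
      also have "\<dots> = int ((h + 1) * l)" using l1 by (simp add: algebra_simps)
      finally show ?thesis .
    qed
    hence "R * s + u0 = (h + 1) * l" by (simp only: of_nat_eq_iff)
    ultimately show ?thesis by (intro exI[of _ u0]) auto
  qed
  then obtain u0 where u0: "u0 \<le> q ^ d - 1" "l dvd R * s + u0" by blast
  have eqv: "l dvd r * s + u \<longleftrightarrow> l dvd R * s + u" for u
  proof -
    obtain k where k: "r = l * k + R" using div_mult_mod_eq[of r l] R_def by (metis mult.commute)
    hence "r * s + u = l * (k * s) + (R * s + u)" by (simp add: algebra_simps)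
    hence "r * s + u = l * (k * s) + (R * s + u)" .
    thus ?thesis by (metis dvd_add_right_iff dvd_triv_left)
  qed
  show ?thesis
  proof (intro exI[of _ u0] conjI allI impI u0(1))
    fix u assume u: "u \<le> q ^ d - 1"
    show "l dvd r * s + u \<longleftrightarrow> u = u0"
    proof
      assume "l dvd r * s + u"
      hence "l dvd R * s + u" using eqv by simp
      hence "[R * s + u = R * s + u0] (mod l)" using u0(2) by (simp add: cong_def dvd_eq_mod_eq_0)
      hence "[u = u0] (mod l)" by (simp add: cong_add_lcancel_nat)
      moreover have "u < l" "u0 < l" using u u0(1) l1 spos by linarith+
      ultimately show "u = u0" by (simp add: cong_def)
    next
      assume "u = u0" thus "l dvd r * s + u" using eqv u0(2) by simp
    qed
  qed
qed


lemma nat_geom: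
  fixes q n :: nat
  assumes "q \<ge> 1"
  shows "q ^ n - 1 = (q - 1) * (\<Sum>i<n. q ^ i)"
proof -
  have "int (q ^ n - 1) = int q ^ n - 1" using assms by (simp add: of_nat_diff)
  also have "\<dots> = (int q - 1) * (\<Sum>i<n. int q ^ i)" by (rule power_diff_1_eq)
  also have "\<dots> = int ((q - 1) * (\<Sum>i<n. q ^ i))" using assms by (simp add: of_nat_diff)
  finally show ?thesis by (simp only: of_nat_eq_iff)
qed

theorem proposition4p1:
  fixes q e r :: nat and a :: "'a::{field,finite}"
  assumes "\<exists>p k. prime p \<and> k \<ge> 1 \<and> q = p ^ k"
    and "e \<ge> 2"
    and "card (UNIV :: 'a set) = q ^ e"
    and "r > 0"
    and "a \<noteq> 0"
    and "\<forall>h::int. int (r mod (\<Sum>i<e. q ^ i)) \<noteq> h * int q + 1"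
  shows "\<not> bij (\<lambda>x::'a. x ^ r * (x ^ (q - 1) + a))"
proof
  define f where "f = (\<lambda>x::'a. x ^ r * (x ^ (q - 1) + a))"
  assume "bij (\<lambda>x::'a. x ^ r * (x ^ (q - 1) + a))"
  hence bf: "bij f" by (simp add: f_def)
  obtain p k where pk: "prime p" "k \<ge> 1" "q = p ^ k" using assms(1) by blast
  have p2: "p \<ge> 2" using pk(1) prime_ge_2_nat by blast
  have "p ^ 1 \<le> p ^ k" using pk(2) p2 by (intro power_increasing) auto
  hence q2: "q \<ge> 2" using p2 pk(3) by simp
  obtain d where ed: "e = Suc d" and d1: "d \<ge> 1" using assms(2) by (cases e) auto
  have "CHAR('a) dvd p ^ (k * e)"
    using CHAR_dvd_CARD[where ?'a='a] assms(3) pk(3) by (simp add: power_mult)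
  hence "CHAR('a) dvd p" using ff_char_prime prime_dvd_power by blast
  hence CH: "CHAR('a) = p" using ff_char_prime pk(1) primes_dvd_imp_eq by blast
  define N where "N = q ^ d - 1"
  have qd1: "q ^ d \<ge> 1" using q2 by simp
  have SN: "Suc N = CHAR('a) ^ (k * d)" using qd1 by (simp add: N_def CH pk(3) power_mult)
  have kd: "k * d \<ge> 1" using pk(2) d1 by simp
  define l where "l = (\<Sum>i<Suc d. q ^ i)"
  define s where "s = (\<Sum>i<d. q ^ i)"
  have Ql: "card (UNIV::'a set) - 1 = (q - 1) * l"
    unfolding assms(3) ed l_def using q2 by (intro nat_geom) simp
  have Ns: "N = (q - 1) * s" unfolding N_def s_def using q2 by (intro nat_geom) simp
  have c1: "(r mod l) mod q \<noteq> 1"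
  proof
    assume h: "(r mod l) mod q = 1"
    have "r mod l = (r mod l) div q * q + (r mod l) mod q" by simp
    hence "int (r mod l) = int ((r mod l) div q) * int q + 1" using h
      by (metis of_nat_1 of_nat_add of_nat_mult)
    thus False using assms(6) ed l_def by blast
  qed
  obtain u0 where u0: "u0 \<le> q ^ d - 1"
    and u0e: "\<And>u. u \<le> q ^ d - 1 \<Longrightarrow> (l dvd r * s + u \<longleftrightarrow> u = u0)"
    using nt_lemma[OF q2 d1 l_def s_def c1] by blast
  have Npos: "N > 0"
  proof -
    have "q ^ 1 \<le> q ^ d" using d1 q2 by (intro power_increasing) auto
    thus ?thesis using q2 by (simp add: N_def)
  qed
  have NQ: "N < card (UNIV::'a set) - 1"
  proof -
    have H: "q ^ d < q ^ Suc d" using q2 by simp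
    show ?thesis unfolding N_def assms(3) ed using H qd1 by linarith
  qed
  have "(\<Sum>x\<in>UNIV. f x ^ N) = (\<Sum>x\<in>UNIV. x ^ N)"
    using sum.reindex_bij_betw[of f UNIV UNIV "\<lambda>y. y ^ N"] bf by (simp add: bij_def bij_betw_def)
  also have "\<dots> = 0"
  proof -
    have "\<not> (card (UNIV::'a set) - 1) dvd N" using NQ Npos nat_dvd_not_less by blast
    thus ?thesis using ff_sum_pow[OF Npos, where ?'a='a] by simp
  qed
  finally have S0: "(\<Sum>x\<in>UNIV. f x ^ N) = 0" .
  have fx: "f x ^ N = (\<Sum>u<Suc N. (-a) ^ (N - u) * x ^ (r * N + (q - 1) * u))" for x
  proof -
    have "f x ^ N = x ^ (r * N) * (x ^ (q - 1) + a) ^ N"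
      by (simp add: f_def power_mult_distrib power_mult)
    also have "(x ^ (q - 1) + a) ^ N = (\<Sum>u<Suc N. (x ^ (q - 1)) ^ u * (-a) ^ (N - u))"
      by (rule ff_expand[OF SN kd])
    also have "x ^ (r * N) * (\<Sum>u<Suc N. (x ^ (q - 1)) ^ u * (-a) ^ (N - u))
       = (\<Sum>u<Suc N. x ^ (r * N) * ((x ^ (q - 1)) ^ u * (-a) ^ (N - u)))"
      by (rule sum_distrib_left)
    also have "\<dots> = (\<Sum>u<Suc N. (-a) ^ (N - u) * x ^ (r * N + (q - 1) * u))"
      by (intro sum.cong refl) (simp add: power_add mult_ac flip: power_mult)
    finally show ?thesis .
  qed
  have "(\<Sum>x\<in>UNIV. f x ^ N) = (\<Sum>u<Suc N. (-a) ^ (N - u) * (\<Sum>x\<in>UNIV. x ^ (r * N + (q - 1) * u)))"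
    by (simp add: fx sum_distrib_left sum.swap[of _ UNIV])
  also have "\<dots> = (\<Sum>u<Suc N. if u = u0 then - ((-a) ^ (N - u)) else 0)"
  proof (intro sum.cong refl)
    fix u assume u: "u \<in> {..<Suc N}"
    have pos: "r * N + (q - 1) * u > 0" using assms(4) Npos by simp
    have "(card (UNIV::'a set) - 1) dvd (r * N + (q - 1) * u) \<longleftrightarrow> (q - 1) * l dvd (q - 1) * (r * s + u)"
    proof -
      have eq: "r * N + (q - 1) * u = (q - 1) * (r * s + u)"
        by (simp only: Ns distrib_left mult.left_commute)
      show ?thesis by (simp only: eq Ql)
    qed
    also have "\<dots> \<longleftrightarrow> l dvd r * s + u" using q2 by simp
    also have "\<dots> \<longleftrightarrow> u = u0" using u u0e by (simp add: N_def)
    finally show "(-a) ^ (N - u) * (\<Sum>x\<in>UNIV. x ^ (r * N + (q - 1) * u)) = (if u = u0 then - ((-a) ^ (N - u)) else 0)"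
      using ff_sum_pow[OF pos, where ?'a='a] by simp
  qed
  also have "\<dots> = - ((-a) ^ (N - u0))" using u0 by (simp add: N_def)
  finally have "(-a) ^ (N - u0) = 0" using S0 by simp
  thus False using assms(5) by simp
qed

end
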